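(* Let $X$ be a Banach space with $n(X)=1$. If $X$ has the $\mathbf{L}_{p,p}$-nu, then the norm of $X$ is strongly subdifferentiable (at every point).
   Context: Let $X$ be a Banach space over $\mathbb{K}\in\{\mathbb{R},\mathbb{C}\}$, $\mathcal{L}(X)$ the bounded linear operators on $X$. $\Pi(X)=\{(x,x^* )\in S_X\times S_{X^*}: x^*(x)=1\}$; $v(T)=\sup\{|x^*(Tx)|:(x,x^* )\in\Pi(X)\}$; $n(X)=\inf\{v(T): T\in\mathcal{L}(X),\ \|T\|=1\}$. $X$ has the $\mathbf{L}_{p,p}$-nu if for every $\varepsilon>0$ and $(x,x^* )\in\Pi(X)$ there is $\eta(\varepsilon,(x,x^* ))>0$ such that whenever $T\in\mathcal{L}(X)$ with $v(T)=1$ satisfies $|x^*(Tx)|>1-\eta(\varepsilon,(x,x^* ))$, there is $S\in\mathcal{L}(X)$ with $v(S)=1$, $|x^*(Sx)|=1$ and $\|S-T\|<\varepsilon$. The norm of $X$ is strongly subdifferentiable (SSD) at $x\in X$ if the limit $\lim_{t\to0^+}\frac{\|x+th\|-\|x\|}{t}$ exists uniformly in $h\in B_X$; the norm is SSD if it is SSD at every point. *)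

theory Defs
  imports "HOL-Analysis.Analysis"
begin

text \<open>Scalars K are represented by a type 'k (real or complex) together with a scalar
  action sc :: 'k => 'a => 'a on the underlying real Banach space 'a.
  For K = R we use sc = scaleR; for K = C, sc is a complex structure (cplx_action).\<close>

definition cplx_action :: "(complex \<Rightarrow> 'a::real_normed_vector \<Rightarrow> 'a) \<Rightarrow> bool" where
  "cplx_action sc \<longleftrightarrow>
     (\<forall>x. sc 1 x = x) \<and> (\<forall>a b x. sc (a * b) x = sc a (sc b x)) \<and>
     (\<forall>a b x. sc (a + b) x = sc a x + sc b x) \<and> (\<forall>a x y. sc a (x + y) = sc a x + sc a y) \<and>
     (\<forall>r x. sc (complex_of_real r) x = r *\<^sub>R x) \<and> (\<forall>a x. norm (sc a x) = cmod a * norm x)"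

definition is_op :: "('k \<Rightarrow> 'a \<Rightarrow> 'a) \<Rightarrow> ('a::real_normed_vector \<Rightarrow> 'a) \<Rightarrow> bool" where
  "is_op sc T \<longleftrightarrow> bounded_linear T \<and> (\<forall>c x. T (sc c x) = sc c (T x))"

definition is_functional :: "('k::real_normed_field \<Rightarrow> 'a \<Rightarrow> 'a) \<Rightarrow> ('a::real_normed_vector \<Rightarrow> 'k) \<Rightarrow> bool" where
  "is_functional sc f \<longleftrightarrow> bounded_linear f \<and> (\<forall>c x. f (sc c x) = c * f x)"

definition PiX :: "('k::real_normed_field \<Rightarrow> 'a \<Rightarrow> 'a) \<Rightarrow> ('a::real_normed_vector \<times> ('a \<Rightarrow> 'k)) set" where
  "PiX sc = {(x, f). norm x = 1 \<and> is_functional sc f \<and> onorm f = 1 \<and> f x = 1}"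

definition numrad :: "('k::real_normed_field \<Rightarrow> 'a \<Rightarrow> 'a) \<Rightarrow> ('a::real_normed_vector \<Rightarrow> 'a) \<Rightarrow> real" where
  "numrad sc T = (SUP p\<in>PiX sc. norm (snd p (T (fst p))))"

definition num_index :: "('k::real_normed_field \<Rightarrow> 'a \<Rightarrow> 'a::real_normed_vector) \<Rightarrow> real" where
  "num_index sc = Inf {numrad sc T | T. is_op sc T \<and> onorm T = 1}"

definition Lpp_nu :: "('k::real_normed_field \<Rightarrow> 'a \<Rightarrow> 'a::real_normed_vector) \<Rightarrow> bool" where
  "Lpp_nu sc \<longleftrightarrow>
    (\<forall>\<epsilon>>0. \<forall>x f. (x, f) \<in> PiX sc \<longrightarrow>
      (\<exists>\<eta>>0. \<forall>T. is_op sc T \<and> numrad sc T = 1 \<and> norm (f (T x)) > 1 - \<eta> \<longrightarrow>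
         (\<exists>S. is_op sc S \<and> numrad sc S = 1 \<and> norm (f (S x)) = 1 \<and>
              onorm (\<lambda>y. S y - T y) < \<epsilon>)))"

definition norm_SSD_at :: "'a::real_normed_vector \<Rightarrow> bool" where
  "norm_SSD_at x \<longleftrightarrow>
    (\<exists>D::'a \<Rightarrow> real. \<forall>\<epsilon>>0. \<exists>\<delta>>0. \<forall>t h. 0 < t \<and> t < \<delta> \<and> norm h \<le> 1 \<longrightarrow>
        \<bar>(norm (x + t *\<^sub>R h) - norm x) / t - D h\<bar> < \<epsilon>)"

end

theory Submission
  imports Defs
begin


definition sublin :: "('a::real_normed_vector \<Rightarrow> real) \<Rightarrow> bool" where
  "sublin p \<longleftrightarrow> (\<forall>a b. p (a + b) \<le> p a + p b) \<and> (\<forall>t a. t \<ge> 0 \<longrightarrow> p (t *\<^sub>R a) = t * p a)"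

definition shiftf :: "('a::real_normed_vector \<Rightarrow> real) \<Rightarrow> 'a \<Rightarrow> 'a \<Rightarrow> real" where
  "shiftf p v y = (INF t\<in>{0::real..}. p (y + t *\<^sub>R v) - t * p v)"

lemma sublin_0: "sublin p \<Longrightarrow> p 0 = 0"
  unfolding sublin_def by (metis mult_zero_left order_refl scaleR_zero_left)

lemma sublin_lower: assumes "sublin p" shows "- p (- y) \<le> p y"
proof -
  have "p 0 \<le> p y + p (-y)" using assms unfolding sublin_def by (metis add.right_inverse)
  then show ?thesis using sublin_0[OF assms] by simp
qed

lemma shift_bdd: assumes "sublin p"
  shows "bdd_below ((\<lambda>t. p (y + t *\<^sub>R v) - t * p v) ` {0..})"
proof (rule bdd_belowI2[where m="- p (- y)"])
  fix t :: real assume "t \<in> {0..}"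
  then have t: "t \<ge> 0" by simp
  have "p (t *\<^sub>R v) \<le> p (y + t *\<^sub>R v) + p (- y)"
    using assms unfolding sublin_def by (metis add.commute diff_add_cancel diff_minus_eq_add minus_minus)
  moreover have "p (t *\<^sub>R v) = t * p v" using assms t unfolding sublin_def by blast
  ultimately show "- p (- y) \<le> p (y + t *\<^sub>R v) - t * p v" by linarith
qed

lemma shift_le: assumes "sublin p" "t \<ge> 0"
  shows "shiftf p v y \<le> p (y + t *\<^sub>R v) - t * p v"
  unfolding shiftf_def by (rule cINF_lower[OF shift_bdd[OF assms(1)]]) (use assms in auto)

lemma shift_ge: assumes "\<And>t. t \<ge> 0 \<Longrightarrow> c \<le> p (y + t *\<^sub>R v) - t * p v"
  shows "c \<le> shiftf p v y"
  unfolding shiftf_def by (rule cINF_greatest) (use assms in auto)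

lemma shift_below: "sublin p \<Longrightarrow> shiftf p v y \<le> p y"
  using shift_le[of p 0 v y] by simp

lemma shift_neg: "sublin p \<Longrightarrow> shiftf p v (- v) \<le> - p v"
  using shift_le[of p 1 v "-v"] sublin_0[of p] by simp

lemma shift_sublin: assumes sp: "sublin p" shows "sublin (shiftf p v)"
proof -
  have add: "p (a + b) \<le> p a + p b" for a b using sp unfolding sublin_def by blast
  have hom: "t \<ge> 0 \<Longrightarrow> p (t *\<^sub>R a) = t * p a" for t a using sp unfolding sublin_def by blast
  have "shiftf p v (a + b) \<le> shiftf p v a + shiftf p v b" for a b
  proof -
    have "shiftf p v (a + b) - (p (b + t *\<^sub>R v) - t * p v) \<le> shiftf p v a" if t: "t \<ge> 0" for t
    proof (rule shift_ge)
      fix s :: real assume s: "s \<ge> 0"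
      have "shiftf p v (a + b) \<le> p ((a + b) + (s + t) *\<^sub>R v) - (s + t) * p v"
        by (rule shift_le[OF sp]) (use s t in simp)
      also have "(a + b) + (s + t) *\<^sub>R v = (a + s *\<^sub>R v) + (b + t *\<^sub>R v)"
        by (simp add: algebra_simps)
      finally show "shiftf p v (a + b) - (p (b + t *\<^sub>R v) - t * p v) \<le> p (a + s *\<^sub>R v) - s * p v"
        using add[of "a + s *\<^sub>R v" "b + t *\<^sub>R v"] by (simp add: algebra_simps)
    qed
    then have "shiftf p v (a + b) - shiftf p v a \<le> shiftf p v b"
      by (intro shift_ge) (auto simp: algebra_simps)
    then show ?thesis by simp
  qed
  moreover have "shiftf p v (c *\<^sub>R a) = c * shiftf p v a" if c: "c \<ge> 0" for c a
  proof (cases "c = 0")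
    case True
    have "shiftf p v 0 = 0"
    proof (rule antisym)
      show "shiftf p v 0 \<le> 0" using shift_below[OF sp, of v 0] sublin_0[OF sp] by simp
      show "0 \<le> shiftf p v 0" by (rule shift_ge) (simp add: hom)
    qed
    then show ?thesis using True by simp
  next
    case False
    then have c0: "c > 0" using c by simp
    have 1: "shiftf p v (c *\<^sub>R a) \<le> c * shiftf p v a"
    proof -
      have "shiftf p v (c *\<^sub>R a) / c \<le> shiftf p v a"
      proof (rule shift_ge)
        fix s :: real assume s: "s \<ge> 0"
        have "shiftf p v (c *\<^sub>R a) \<le> p (c *\<^sub>R a + (c * s) *\<^sub>R v) - (c * s) * p v"
          by (rule shift_le[OF sp]) (use s c in simp)
        also have "c *\<^sub>R a + (c * s) *\<^sub>R v = c *\<^sub>R (a + s *\<^sub>R v)" by (simp add: algebra_simps)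
        also have "p (c *\<^sub>R (a + s *\<^sub>R v)) = c * p (a + s *\<^sub>R v)" using hom[OF c] by blast
        finally have "shiftf p v (c *\<^sub>R a) \<le> c * (p (a + s *\<^sub>R v) - s * p v)"
          by (simp add: algebra_simps)
        then show "shiftf p v (c *\<^sub>R a) / c \<le> p (a + s *\<^sub>R v) - s * p v"
          using c0 by (simp add: divide_le_eq mult.commute)
      qed
      then show ?thesis using c0 by (simp add: divide_le_eq mult.commute)
    qed
    have 2: "c * shiftf p v a \<le> shiftf p v (c *\<^sub>R a)"
    proof (rule shift_ge)
      fix t :: real assume t: "t \<ge> 0"
      have "shiftf p v a \<le> p (a + (t / c) *\<^sub>R v) - (t / c) * p v"
        by (rule shift_le[OF sp]) (use t c0 in simp)
      then have "c * shiftf p v a \<le> c * (p (a + (t / c) *\<^sub>R v) - (t / c) * p v)"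
        using c0 by (simp add: mult_left_mono)
      then have "c * shiftf p v a \<le> c * p (a + (t / c) *\<^sub>R v) - t * p v"
        using c0 by (simp add: right_diff_distrib)
      also have "c * p (a + (t / c) *\<^sub>R v) = p (c *\<^sub>R a + t *\<^sub>R v)"
        using hom[OF c, of "a + (t / c) *\<^sub>R v"] c0 by (simp add: algebra_simps)
      finally show "c * shiftf p v a \<le> p (c *\<^sub>R a + t *\<^sub>R v) - t * p v" .
    qed
    from 1 2 show ?thesis by simp
  qed
  ultimately show ?thesis unfolding sublin_def by blast
qed

lemma norm_sublin: "sublin norm"
  unfolding sublin_def by (auto simp: norm_triangle_ineq)

lemma chain_inf_sublin:
  assumes C: "C \<noteq> {}" "\<And>q. q \<in> C \<Longrightarrow> sublin q \<and> (\<forall>y. q y \<le> norm y)"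
    and ch: "\<And>q1 q2. q1 \<in> C \<Longrightarrow> q2 \<in> C \<Longrightarrow> (\<forall>y. q1 y \<le> q2 y) \<or> (\<forall>y. q2 y \<le> q1 y)"
  shows "sublin (\<lambda>y. INF q\<in>C. q y)" (is "sublin ?u")
proof -
  have bdd: "bdd_below ((\<lambda>q. q y) ` C)" for y
  proof (rule bdd_belowI2[where m="- norm y"])
    fix q assume "q \<in> C"
    then have "- q (- y) \<le> q y" "q (-y) \<le> norm (-y)" using C sublin_lower by blast+
    then show "- norm y \<le> q y" by simp
  qed
  have low: "q \<in> C \<Longrightarrow> ?u y \<le> q y" for q y by (rule cINF_lower[OF bdd])
  have gr: "(\<And>q. q \<in> C \<Longrightarrow> c \<le> q y) \<Longrightarrow> c \<le> ?u y" for c y by (rule cINF_greatest[OF C(1)])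
  have add: "?u (a + b) \<le> ?u a + ?u b" for a b
  proof -
    have "?u (a + b) - q2 b \<le> q1 a" if "q1 \<in> C" "q2 \<in> C" for q1 q2
    proof -
      from ch[OF that] have "\<exists>q\<in>C. (\<forall>y. q y \<le> q1 y) \<and> (\<forall>y. q y \<le> q2 y)"
        using that by (metis order_refl)
      then obtain q where q: "q \<in> C" "\<forall>y. q y \<le> q1 y" "\<forall>y. q y \<le> q2 y" by blast
      have "?u (a + b) \<le> q (a + b)" by (rule low[OF q(1)])
      also have "\<dots> \<le> q a + q b" using C(2)[OF q(1)] unfolding sublin_def by blast
      also have "\<dots> \<le> q1 a + q2 b" using q by (simp add: add_mono)
      finally show ?thesis by simp
    qed
    then have "?u (a + b) - q2 b \<le> ?u a" if "q2 \<in> C" for q2 using that by (intro gr) auto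
    then have "?u (a + b) - ?u a \<le> ?u b" by (intro gr) (auto simp: algebra_simps)
    then show ?thesis by simp
  qed
  have hom: "?u (t *\<^sub>R a) = t * ?u a" if t: "t \<ge> 0" for t a
  proof -
    have qh: "q \<in> C \<Longrightarrow> q (t *\<^sub>R a) = t * q a" for q using C(2) t unfolding sublin_def by blast
    show ?thesis
    proof (cases "t = 0")
      case True
      have "q \<in> C \<Longrightarrow> q 0 = 0" for q using C(2) sublin_0 by blast
      then have "(\<lambda>q. q 0) ` C = {0}" using C(1) by (auto simp: image_iff)
      then have "?u 0 = 0" by simp
      then show ?thesis using True by simp
    next
      case False
      then have t0: "t > 0" using t by simp
      have 1: "?u (t *\<^sub>R a) \<le> t * ?u a"
      proof -
        have "?u (t *\<^sub>R a) / t \<le> ?u a"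
        proof (rule gr)
          fix q assume q: "q \<in> C"
          have "?u (t *\<^sub>R a) \<le> t * q a" using low[OF q, of "t *\<^sub>R a"] qh[OF q] by simp
          then show "?u (t *\<^sub>R a) / t \<le> q a" using t0 by (simp add: divide_le_eq mult.commute)
        qed
        then show ?thesis using t0 by (simp add: divide_le_eq mult.commute)
      qed
      have 2: "t * ?u a \<le> ?u (t *\<^sub>R a)"
      proof (rule gr)
        fix q assume q: "q \<in> C"
        have "t * ?u a \<le> t * q a" using low[OF q, of a] t by (simp add: mult_left_mono)
        then show "t * ?u a \<le> q (t *\<^sub>R a)" using qh[OF q] by simp
      qed
      from 1 2 show ?thesis by simp
    qed
  qed
  show ?thesis unfolding sublin_def using add hom by blast
qed

lemma real_HB:
  fixes x :: "'a::real_normed_vector"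
  shows "\<exists>f. linear f \<and> (\<forall>y. \<bar>f y\<bar> \<le> norm y) \<and> f x = norm x"
proof -
  define P where "P = {p :: 'a \<Rightarrow> real. sublin p \<and> (\<forall>y. p y \<le> norm y) \<and> p (- x) \<le> - norm x}"
  define Q where "Q = (\<lambda>(a :: 'a \<Rightarrow> real) u. \<forall>y. u y \<le> a y)"
  have po: "partial_order_on P (relation_of Q P)"
    by (rule partial_order_on_relation_ofI) (auto simp: Q_def intro: order_trans, metis antisym ext)
  have p0: "shiftf norm x \<in> P"
    unfolding P_def using shift_sublin[OF norm_sublin] shift_below[OF norm_sublin] shift_neg[OF norm_sublin]
    by blast
  have "\<exists>u\<in>P. \<forall>a\<in>C. Q a u" if C: "C \<in> Chains (relation_of Q P)" for C
  proof (cases "C = {}")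
    case True then show ?thesis using p0 by blast
  next
    case False
    have CP: "C \<subseteq> P" using C False unfolding Chains_def relation_of_def by blast
    have ch: "q1 \<in> C \<Longrightarrow> q2 \<in> C \<Longrightarrow> (\<forall>y. q1 y \<le> q2 y) \<or> (\<forall>y. q2 y \<le> q1 y)" for q1 q2
      using C unfolding Chains_def relation_of_def Q_def by blast
    define u where "u = (\<lambda>y. INF q\<in>C. q y)"
    have su: "sublin u" unfolding u_def
      by (rule chain_inf_sublin[OF False]) (use CP ch P_def in auto)
    have bdd: "bdd_below ((\<lambda>q. q y) ` C)" for y
    proof (rule bdd_belowI2[where m="- norm y"])
      fix q assume "q \<in> C"
      then have "sublin q" "\<forall>y. q y \<le> norm y" using CP P_def by auto
      then have "- q (- y) \<le> q y" "q (-y) \<le> norm (-y)" using sublin_lower by blast+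
      then show "- norm y \<le> q y" by simp
    qed
    have low: "q \<in> C \<Longrightarrow> u y \<le> q y" for q y unfolding u_def by (rule cINF_lower[OF bdd])
    obtain q0 where q0: "q0 \<in> C" using False by blast
    have "u \<in> P" unfolding P_def using su low[OF q0] CP q0 unfolding P_def
      by (auto intro: order_trans)
    moreover have "\<forall>a\<in>C. Q a u" using low unfolding Q_def by blast
    ultimately show ?thesis by blast
  qed
  from predicate_Zorn[OF po this] obtain m where m: "m \<in> P" "\<And>a. a \<in> P \<Longrightarrow> Q m a \<Longrightarrow> a = m"
    by blast
  have sm: "sublin m" using m(1) P_def by blast
  have neg: "m (- v) \<le> - m v" for v
  proof -
    have "shiftf m v \<in> P" using m(1) shift_sublin[OF sm] shift_below[OF sm] unfolding P_def
      by (smt (verit) mem_Collect_eq)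
    moreover have "Q m (shiftf m v)" using shift_below[OF sm] Q_def by blast
    ultimately have "shiftf m v = m" using m(2) by blast
    then show ?thesis using shift_neg[OF sm, of v] by simp
  qed
  have negeq: "m (- v) = - m v" for v using neg[of v] sublin_lower[OF sm, of v] by simp
  have addm: "m (a + b) = m a + m b" for a b
  proof -
    have "m (a + b) \<le> m a + m b" using sm unfolding sublin_def by blast
    moreover have "m (- a + - b) \<le> m (- a) + m (- b)" using sm unfolding sublin_def by blast
    then have "- m (a + b) \<le> - m a - m b" using negeq by (metis minus_add_distrib diff_conv_add_uminus)
    ultimately show ?thesis by simp
  qed
  have homm: "m (c *\<^sub>R a) = c * m a" for c a
  proof (cases "c \<ge> 0")
    case True then show ?thesis using sm unfolding sublin_def by blast
  next
    case False
    then have c: "- c \<ge> 0" by simp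
    have "m ((- c) *\<^sub>R (- a)) = (- c) * m (- a)"
      by (rule sm[unfolded sublin_def, THEN conjunct2, rule_format, OF c])
    moreover have "(- c) *\<^sub>R (- a) = c *\<^sub>R a" by simp
    ultimately have "m (c *\<^sub>R a) = (- c) * m (- a)" by simp
    then show ?thesis using negeq[of a] by simp
  qed
  have "linear m" by (rule linearI) (simp_all add: addm homm)
  moreover have "\<bar>m y\<bar> \<le> norm y" for y
  proof -
    have "m y \<le> norm y" "m (- y) \<le> norm (- y)" using m(1) unfolding P_def by blast+
    then show ?thesis using negeq[of y] by (simp add: abs_le_iff)
  qed
  moreover have "m x = norm x"
  proof -
    have "m x \<le> norm x" "m (- x) \<le> - norm x" using m(1) unfolding P_def by blast+
    then show ?thesis using negeq[of x] by simp
  qed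
  ultimately show ?thesis by blast
qed




lemma onorm_one:
  assumes "bounded_linear f" "\<And>y. norm (f y) \<le> norm y" "x \<noteq> 0" "norm (f x) = norm x"
  shows "onorm f = 1"
proof (rule antisym)
  show "onorm f \<le> 1" by (rule onorm_bound) (use assms in auto)
  have "norm x \<le> onorm f * norm x" using onorm[OF assms(1), of x] assms(4) by simp
  then show "1 \<le> onorm f" using assms(3) by simp
qed

locale scal =
  fixes sc :: "'k::real_normed_field \<Rightarrow> 'a::banach \<Rightarrow> 'a" and re :: "'k \<Rightarrow> real"
  assumes sc_one: "sc 1 x = x"
    and sc_mult: "sc (a * b) x = sc a (sc b x)"
    and sc_addl: "sc (a + b) x = sc a x + sc b x"
    and sc_addr: "sc a (x + y) = sc a x + sc a y"
    and sc_real: "sc (of_real r) x = r *\<^sub>R x"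
    and sc_norm: "norm (sc a x) = norm a * norm x"
    and re_add: "re (a + b) = re a + re b"
    and re_real: "re (of_real r) = r"
    and re_scale: "re (of_real r * a) = r * re a"
    and re_le: "re a \<le> norm a"
    and HB: "x \<noteq> 0 \<Longrightarrow> \<exists>f. is_functional sc f \<and> onorm f = 1 \<and> f x = of_real (norm x)"
begin

lemma re_minus: "re (- a) = - re a"
  using re_scale[of "-1" a] by simp

lemma re_diff: "re (a - b) = re a - re b"
  using re_add[of a "- b"] re_minus[of b] by simp

lemma re_ge: "- norm a \<le> re a"
  using re_le[of "- a"] re_minus[of a] by simp

lemma sc_scaleR: "sc c (r *\<^sub>R v) = r *\<^sub>R sc c v"
proof -
  have "sc c (r *\<^sub>R v) = sc c (sc (of_real r) v)" by (simp add: sc_real)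
  also have "\<dots> = sc (of_real r * c) v" by (simp add: sc_mult[symmetric] mult.commute)
  also have "\<dots> = r *\<^sub>R sc c v" by (simp add: sc_mult sc_real)
  finally show ?thesis .
qed

lemma func_bl: "is_functional sc f \<Longrightarrow> bounded_linear f"
  unfolding is_functional_def by blast

lemma func_bound: "is_functional sc f \<Longrightarrow> norm (f y) \<le> onorm f * norm y"
  using onorm func_bl by blast

lemma op_bl: "is_op sc T \<Longrightarrow> bounded_linear T"
  unfolding is_op_def by blast

lemma unit_pair: assumes "norm u = 1" shows "\<exists>f. (u, f) \<in> PiX sc"
proof -
  have "u \<noteq> 0" using assms by auto
  from HB[OF this] obtain f where "is_functional sc f" "onorm f = 1" "f u = of_real (norm u)" by blast
  then show ?thesis using assms unfolding PiX_def by auto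
qed

lemma pair_bound:
  assumes "is_op sc T" "(x, f) \<in> PiX sc"
  shows "norm (f (T x)) \<le> onorm T"
proof -
  have f: "is_functional sc f" "onorm f = 1" "norm x = 1" using assms(2) unfolding PiX_def by auto
  have "norm (f (T x)) \<le> onorm f * norm (T x)" by (rule func_bound[OF f(1)])
  also have "\<dots> \<le> onorm T" using onorm[OF op_bl[OF assms(1)], of x] f by simp
  finally show ?thesis .
qed

lemma numrad_bdd: "is_op sc T \<Longrightarrow> bdd_above ((\<lambda>p. norm (snd p (T (fst p)))) ` PiX sc)"
  by (rule bdd_aboveI2[where M="onorm T"]) (auto intro: pair_bound)

lemma numrad_upper: "is_op sc T \<Longrightarrow> (x, f) \<in> PiX sc \<Longrightarrow> norm (f (T x)) \<le> numrad sc T"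
  unfolding numrad_def using cSUP_upper[OF _ numrad_bdd, of "(x, f)" T] by auto

lemma numrad_le: "is_op sc T \<Longrightarrow> PiX sc \<noteq> {} \<Longrightarrow> numrad sc T \<le> onorm T"
  unfolding numrad_def by (rule cSUP_least) (auto intro: pair_bound)

lemma numrad_nonneg: "is_op sc T \<Longrightarrow> PiX sc \<noteq> {} \<Longrightarrow> 0 \<le> numrad sc T"
  using numrad_upper by (metis ex_in_conv norm_ge_zero order_trans prod.collapse)

lemma index_le:
  assumes "num_index sc = 1" "is_op sc T" "onorm T = 1" "PiX sc \<noteq> {}"
  shows "1 \<le> numrad sc T"
proof -
  have "bdd_below {numrad sc T | T. is_op sc T \<and> onorm T = 1}"
    by (rule bdd_belowI[where m=0]) (use numrad_nonneg assms(4) in auto)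
  then have "num_index sc \<le> numrad sc T" unfolding num_index_def
    by (intro cInf_lower) (use assms in auto)
  then show ?thesis using assms by simp
qed

lemma onorm_le_numrad:
  assumes idx: "num_index sc = 1" and S: "is_op sc S" and ne: "PiX sc \<noteq> {}"
  shows "onorm S \<le> numrad sc S"
proof (cases "onorm S = 0")
  case True then show ?thesis using numrad_nonneg[OF S ne] by simp
next
  case False
  have blS: "bounded_linear S" by (rule op_bl[OF S])
  then have n: "onorm S > 0" using False onorm_pos_le by (metis less_eq_real_def)
  define T where "T = (\<lambda>y. (1 / onorm S) *\<^sub>R S y)"
  have blT: "bounded_linear T" unfolding T_def by (intro bounded_linear_compose[OF bounded_linear_scaleR_right blS])
  have "is_op sc T" using S blT unfolding is_op_def T_def by (simp add: sc_scaleR)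
  moreover have "onorm T = 1" unfolding T_def using onorm_scaleR[OF blS, of "1 / onorm S"] n by simp
  ultimately have 1: "1 \<le> numrad sc T" using index_le[OF idx _ _ ne] by blast
  have "numrad sc T \<le> numrad sc S / onorm S" unfolding numrad_def[of sc T]
  proof (rule cSUP_least[OF ne])
    fix p assume p: "p \<in> PiX sc"
    obtain x f where xf: "p = (x, f)" by fastforce
    have "is_functional sc f" using p xf unfolding PiX_def by auto
    then have "f (T x) = (1 / onorm S) *\<^sub>R f (S x)" unfolding T_def
      using linear_scale[OF bounded_linear.linear[OF func_bl]] by blast
    then have "norm (f (T x)) = norm (f (S x)) / onorm S" using n by simp
    also have "\<dots> \<le> numrad sc S / onorm S"
      using numrad_upper[OF S, of x f] p xf n by (simp add: divide_right_mono)
    finally show "norm (snd p (T (fst p))) \<le> numrad sc S / onorm S" using xf by simp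
  qed
  with 1 have "1 \<le> numrad sc S / onorm S" by simp
  then show ?thesis using n by (simp add: le_divide_eq)
qed

end



context scal begin

lemma rank_one_op:
  assumes g: "is_functional sc g" and u: "norm u = 1"
  shows "is_op sc (\<lambda>y. sc (g y) u)" "onorm (\<lambda>y. sc (g y) u) = onorm g"
proof -
  have blg: "bounded_linear g" by (rule func_bl[OF g])
  have gl: "g (a + b) = g a + g b" "g (r *\<^sub>R a) = r *\<^sub>R g a" for a b r
    using linear_add[OF bounded_linear.linear[OF blg]] linear_scale[OF bounded_linear.linear[OF blg]] by blast+
  have nrm: "norm (sc (g y) u) = norm (g y)" for y using sc_norm u by simp
  have "bounded_linear (\<lambda>y. sc (g y) u)"
  proof (rule bounded_linear_intro[where K="onorm g"])
    show "sc (g (a + b)) u = sc (g a) u + sc (g b) u" for a b by (simp add: gl sc_addl)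
    show "sc (g (r *\<^sub>R a)) u = r *\<^sub>R sc (g a) u" for r a
      by (simp add: gl scaleR_conv_of_real sc_mult sc_real)
    show "norm (sc (g a) u) \<le> norm a * onorm g" for a
      using func_bound[OF g, of a] nrm by (simp add: mult.commute)
  qed
  moreover have "sc (g (sc c y)) u = sc c (sc (g y) u)" for c y
    using g unfolding is_functional_def by (simp add: sc_mult)
  ultimately show "is_op sc (\<lambda>y. sc (g y) u)" unfolding is_op_def by blast
  show "onorm (\<lambda>y. sc (g y) u) = onorm g" unfolding onorm_def by (simp add: nrm)
qed

lemma approx:
  assumes idx: "num_index sc = 1" and nu: "Lpp_nu sc" and u: "norm u = 1" and e: "\<epsilon> > 0"
  shows "\<exists>\<eta>>0. \<forall>g. is_functional sc g \<and> onorm g = 1 \<and> norm (g u - 1) < \<eta> \<longrightarrow>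
     (\<exists>w. is_functional sc w \<and> w u = 1 \<and> (\<forall>y. norm (w y) \<le> norm y) \<and> (\<forall>y. norm (w y - g y) \<le> \<epsilon> * norm y))"
proof -
  obtain xs where xs: "(u, xs) \<in> PiX sc" using unit_pair[OF u] by blast
  have xsf: "is_functional sc xs" "onorm xs = 1" "xs u = 1" using xs unfolding PiX_def by auto
  have blx: "bounded_linear xs" by (rule func_bl[OF xsf(1)])
  have ne: "PiX sc \<noteq> {}" using xs by blast
  define e1 where "e1 = \<epsilon> / 3"
  have e1: "e1 > 0" using e e1_def by simp
  from nu e1 xs obtain \<eta> where \<eta>: "\<eta> > 0" and
    H: "\<And>T. is_op sc T \<and> numrad sc T = 1 \<and> norm (xs (T u)) > 1 - \<eta> \<Longrightarrow>
         (\<exists>S. is_op sc S \<and> numrad sc S = 1 \<and> norm (xs (S u)) = 1 \<and> onorm (\<lambda>y. S y - T y) < e1)"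
    unfolding Lpp_nu_def by blast
  show ?thesis
  proof (intro exI[of _ "min \<eta> e1"] conjI allI impI)
    show "min \<eta> e1 > 0" using \<eta> e1 by simp
    fix g assume "is_functional sc g \<and> onorm g = 1 \<and> norm (g u - 1) < min \<eta> e1"
    then have g: "is_functional sc g" "onorm g = 1" "norm (g u - 1) < min \<eta> e1" by auto
    define T where "T = (\<lambda>y. sc (g y) u)"
    have T: "is_op sc T" "onorm T = 1" using rank_one_op[OF g(1) u] g(2) unfolding T_def by auto
    have "numrad sc T = 1" using index_le[OF idx T ne] numrad_le[OF T(1) ne] T(2) by simp
    moreover have xsT: "xs (T y) = g y" for y
      using xsf unfolding T_def is_functional_def by simp
    moreover have "norm (g u) > 1 - \<eta>"
    proof -
      have "1 - norm (g u) \<le> norm (g u - 1)" using norm_triangle_ineq2[of 1 "g u"] by (simp add: norm_minus_commute)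
      then show ?thesis using g(3) by simp
    qed
    ultimately obtain S where S: "is_op sc S" "numrad sc S = 1" "norm (xs (S u)) = 1"
      "onorm (\<lambda>y. S y - T y) < e1" using H[of T] T by auto
    have blS: "bounded_linear S" by (rule op_bl[OF S(1)])
    have blT: "bounded_linear T" by (rule op_bl[OF T(1)])
    have oS: "onorm S \<le> 1" using onorm_le_numrad[OF idx S(1) ne] S(2) by simp
    define z where "z = (\<lambda>y. xs (S y))"
    define c0 where "c0 = z u"
    have c0: "norm c0 = 1" using S(3) unfolding c0_def z_def .
    then have c0nz: "c0 \<noteq> 0" by auto
    define w where "w = (\<lambda>y. inverse c0 * z y)"
    have zf: "is_functional sc z"
      using xsf(1) S(1) unfolding is_functional_def is_op_def z_def
      by (auto intro: bounded_linear_compose)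
    have wf: "is_functional sc w"
      using zf unfolding is_functional_def w_def
      by (auto intro: bounded_linear_compose[OF bounded_linear_mult_right] simp: algebra_simps)
    have zb: "norm (z y) \<le> norm y" for y
    proof -
      have "norm (z y) \<le> onorm xs * norm (S y)" unfolding z_def by (rule func_bound[OF xsf(1)])
      also have "\<dots> = norm (S y)" using xsf by simp
      also have "\<dots> \<le> onorm S * norm y" by (rule onorm[OF blS])
      also have "\<dots> \<le> norm y" using oS mult_right_mono[OF oS norm_ge_zero[of y]] by simp
      finally show ?thesis .
    qed
    have zg: "norm (z y - g y) \<le> e1 * norm y" for y
    proof -
      have "z y - g y = xs (S y - T y)" unfolding z_def using xsT linear_diff[OF bounded_linear.linear[OF blx]] by simp
      then have "norm (z y - g y) \<le> onorm xs * norm (S y - T y)" using func_bound[OF xsf(1)] by simp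
      also have "\<dots> = norm (S y - T y)" using xsf by simp
      also have "\<dots> \<le> onorm (\<lambda>y. S y - T y) * norm y" by (rule onorm[OF bounded_linear_sub[OF blS blT]])
      also have "\<dots> \<le> e1 * norm y" using S(4) by (simp add: mult_right_mono)
      finally show ?thesis .
    qed
    have c01: "norm (1 - c0) \<le> 2 * e1"
    proof -
      have "norm (1 - c0) \<le> norm (1 - g u) + norm (g u - c0)" using norm_triangle_ineq[of "1 - g u" "g u - c0"] by simp
      also have "norm (g u - c0) \<le> e1" using zg[of u] u unfolding c0_def by (simp add: norm_minus_commute)
      also have "norm (1 - g u) < e1" using g(3) by (simp add: norm_minus_commute)
      finally show ?thesis by simp
    qed
    show "\<exists>w. is_functional sc w \<and> w u = 1 \<and> (\<forall>y. norm (w y) \<le> norm y) \<and> (\<forall>y. norm (w y - g y) \<le> \<epsilon> * norm y)"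
    proof (intro exI[of _ w] conjI allI)
      show "is_functional sc w" by (rule wf)
      show "w u = 1" unfolding w_def c0_def[symmetric] using c0nz by simp
      fix y
      show "norm (w y) \<le> norm y" unfolding w_def using zb[of y] c0 by (simp add: norm_mult norm_inverse)
      have "w y - z y = ((1 - c0) / c0) * z y" unfolding w_def using c0nz by (simp add: field_simps)
      then have "norm (w y - z y) = norm (1 - c0) * norm (z y)" using c0 by (simp add: norm_mult norm_divide)
      also have "\<dots> \<le> (2 * e1) * norm y" using mult_mono[OF c01 zb[of y]] e1 by simp
      finally have 1: "norm (w y - z y) \<le> 2 * e1 * norm y" .
      have "norm (w y - g y) \<le> norm (w y - z y) + norm (z y - g y)"
        using norm_triangle_ineq[of "w y - z y" "z y - g y"] by simp
      also have "\<dots> \<le> 2 * e1 * norm y + e1 * norm y" using 1 zg[of y] by simp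
      also have "\<dots> = \<epsilon> * norm y" unfolding e1_def by (simp add: algebra_simps)
      finally show "norm (w y - g y) \<le> \<epsilon> * norm y" .
    qed
  qed
qed

end



lemma ssd_scale:
  fixes u :: "'a::real_normed_vector"
  assumes "norm_SSD_at u" "c > 0"
  shows "norm_SSD_at (c *\<^sub>R u)"
proof -
  obtain D where D: "\<And>\<epsilon>. \<epsilon> > 0 \<Longrightarrow> \<exists>\<delta>>0. \<forall>t h. 0 < t \<and> t < \<delta> \<and> norm h \<le> 1 \<longrightarrow>
        \<bar>(norm (u + t *\<^sub>R h) - norm u) / t - D h\<bar> < \<epsilon>"
    using assms(1) unfolding norm_SSD_at_def by blast
  show ?thesis unfolding norm_SSD_at_def
  proof (intro exI[of _ D] allI impI)
    fix \<epsilon> :: real assume e: "\<epsilon> > 0"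
    obtain \<delta> where d: "\<delta> > 0" "\<forall>t h. 0 < t \<and> t < \<delta> \<and> norm h \<le> 1 \<longrightarrow>
        \<bar>(norm (u + t *\<^sub>R h) - norm u) / t - D h\<bar> < \<epsilon>" using D[OF e] by blast
    show "\<exists>\<delta>>0. \<forall>t h. 0 < t \<and> t < \<delta> \<and> norm h \<le> 1 \<longrightarrow>
        \<bar>(norm (c *\<^sub>R u + t *\<^sub>R h) - norm (c *\<^sub>R u)) / t - D h\<bar> < \<epsilon>"
    proof (intro exI[of _ "c * \<delta>"] conjI allI impI)
      show "c * \<delta> > 0" using d assms by simp
      fix t :: real and h :: 'a assume th: "0 < t \<and> t < c * \<delta> \<and> norm h \<le> 1"
      have "0 < t / c" "t / c < \<delta>" using th assms by (auto simp: divide_less_eq mult.commute)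
      then have *: "\<bar>(norm (u + (t / c) *\<^sub>R h) - norm u) / (t / c) - D h\<bar> < \<epsilon>" using d th by blast
      have "c *\<^sub>R u + t *\<^sub>R h = c *\<^sub>R (u + (t / c) *\<^sub>R h)" using assms by (simp add: algebra_simps)
      then have "norm (c *\<^sub>R u + t *\<^sub>R h) = c * norm (u + (t / c) *\<^sub>R h)" using assms by simp
      then have eq: "(norm (c *\<^sub>R u + t *\<^sub>R h) - norm (c *\<^sub>R u)) / t = (norm (u + (t / c) *\<^sub>R h) - norm u) / (t / c)"
        using assms th by (simp add: field_simps)
      show "\<bar>(norm (c *\<^sub>R u + t *\<^sub>R h) - norm (c *\<^sub>R u)) / t - D h\<bar> < \<epsilon>" unfolding eq by (rule *)
    qed
  qed
qed

lemma ssd_zero: "norm_SSD_at (0::'a::real_normed_vector)"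
  unfolding norm_SSD_at_def by (intro exI[of _ norm] allI impI exI[of _ 1]) auto

context scal begin

lemma ssd_unit:
  fixes u :: 'a
  assumes idx: "num_index sc = 1" and nu: "Lpp_nu sc" and u: "norm u = 1"
  shows "norm_SSD_at u"
proof -
  define q where "q = (\<lambda>s h. (norm (u + s *\<^sub>R h) - norm u) / s)"
  define D where "D = (\<lambda>h. INF s\<in>{0<..}. q s h)"
  have qlow: "- norm h \<le> q s h" if "s > 0" for s h
  proof -
    have "norm u - norm (s *\<^sub>R h) \<le> norm (u + s *\<^sub>R h)" using norm_triangle_sub[of u "u + s *\<^sub>R h"] by simp
    then have "- (s * norm h) \<le> norm (u + s *\<^sub>R h) - norm u" using that by simp
    then show ?thesis unfolding q_def using that by (simp add: le_divide_eq mult.commute)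
  qed
  have Dle: "D h \<le> q s h" if "s > 0" for s h
    unfolding D_def by (rule cINF_lower[OF bdd_belowI2[where m="- norm h"]]) (use qlow that in auto)
  have Dge: "(\<And>s. s > 0 \<Longrightarrow> c \<le> q s h) \<Longrightarrow> c \<le> D h" for c h
    unfolding D_def by (rule cINF_greatest) auto
  show ?thesis unfolding norm_SSD_at_def
  proof (intro exI[of _ D] allI impI)
    fix \<epsilon> :: real assume e: "\<epsilon> > 0"
    obtain \<eta> where \<eta>: "\<eta> > 0" and A: "\<And>g. is_functional sc g \<and> onorm g = 1 \<and> norm (g u - 1) < \<eta> \<Longrightarrow>
     (\<exists>w. is_functional sc w \<and> w u = 1 \<and> (\<forall>y. norm (w y) \<le> norm y) \<and> (\<forall>y. norm (w y - g y) \<le> (\<epsilon> / 2) * norm y))"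
      using approx[OF idx nu u, of "\<epsilon> / 2"] e by auto
    show "\<exists>\<delta>>0. \<forall>t h. 0 < t \<and> t < \<delta> \<and> norm h \<le> 1 \<longrightarrow>
        \<bar>(norm (u + t *\<^sub>R h) - norm u) / t - D h\<bar> < \<epsilon>"
    proof (intro exI[of _ "min (\<eta> / 2) (1 / 2)"] conjI allI impI)
      show "min (\<eta> / 2) (1 / 2) > 0" using \<eta> by simp
      fix t :: real and h :: 'a assume th: "0 < t \<and> t < min (\<eta> / 2) (1 / 2) \<and> norm h \<le> 1"
      then have t: "0 < t" "2 * t < \<eta>" "t < 1 / 2" and h: "norm h \<le> 1" by auto
      define v where "v = u + t *\<^sub>R h"
      have th1: "norm (t *\<^sub>R h) \<le> t" using t h by (simp add: mult_left_le_one_le)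
      have nv: "\<bar>norm v - 1\<bar> \<le> t"
        using norm_triangle_ineq3[of v u] th1 u unfolding v_def by simp
      then have "v \<noteq> 0" using t by auto
      from HB[OF this] obtain g where g: "is_functional sc g" "onorm g = 1" "g v = of_real (norm v)" by blast
      have blg: "bounded_linear g" by (rule func_bl[OF g(1)])
      have gv: "g v = g u + of_real t * g h"
        unfolding v_def using linear_add[OF bounded_linear.linear[OF blg]] linear_scale[OF bounded_linear.linear[OF blg]]
        by (simp add: scaleR_conv_of_real)
      have gh: "norm (g h) \<le> 1" using func_bound[OF g(1), of h] g(2) h by simp
      have gu: "norm (g u) \<le> 1" using func_bound[OF g(1), of u] g(2) u by simp
      have "g u - 1 = of_real (norm v - 1) - of_real t * g h" using gv g(3) by (simp add: algebra_simps)
      then have "norm (g u - 1) = norm ((of_real (norm v - 1) :: 'k) - of_real t * g h)" by (simp only:)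
      also have "\<dots> \<le> norm (of_real (norm v - 1) :: 'k) + norm (of_real t * g h)"
        by (rule norm_triangle_ineq4)
      also have "\<dots> \<le> t + t * 1"
      proof -
        have "norm (of_real (norm v - 1) :: 'k) = \<bar>norm v - 1\<bar>" by (rule norm_of_real)
        moreover have "norm (of_real t * g h) \<le> t * 1" using gh t by (simp add: norm_mult mult_left_mono)
        ultimately show ?thesis using nv by linarith
      qed
      finally have "norm (g u - 1) < \<eta>" using t by simp
      then obtain w where w: "is_functional sc w" "w u = 1" "\<And>y. norm (w y) \<le> norm y"
        "\<And>y. norm (w y - g y) \<le> (\<epsilon> / 2) * norm y" using A g by blast
      have blw: "bounded_linear w" by (rule func_bl[OF w(1)])
      have upper: "q t h \<le> re (g h)"
      proof -
        have "norm v = re (g v)" using g(3) re_real by simp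
        also have "\<dots> = re (g u) + t * re (g h)" using gv re_add re_scale by simp
        also have "\<dots> \<le> 1 + t * re (g h)" using re_le[of "g u"] gu by simp
        finally have "norm v - 1 \<le> t * re (g h)" by simp
        then show ?thesis unfolding q_def v_def using u t by (simp add: divide_le_eq mult.commute)
      qed
      have wh: "re (g h) - \<epsilon> / 2 \<le> re (w h)"
      proof -
        have "- norm (w h - g h) \<le> re (w h - g h)" by (rule re_ge)
        moreover have "(\<epsilon> / 2) * norm h \<le> \<epsilon> / 2" using h e by (simp add: mult_left_le)
        then have "norm (w h - g h) \<le> \<epsilon> / 2" using w(4)[of h] by linarith
        ultimately show ?thesis using re_diff by simp
      qed
      have lower: "re (w h) \<le> q s h" if s: "s > 0" for s
      proof -
        have "w (u + s *\<^sub>R h) = 1 + of_real s * w h"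
          using w(2) linear_add[OF bounded_linear.linear[OF blw]] linear_scale[OF bounded_linear.linear[OF blw]]
          by (simp add: scaleR_conv_of_real)
        then have "re (w (u + s *\<^sub>R h)) = 1 + s * re (w h)" using re_add re_scale re_real[of 1] by simp
        moreover have "re (w (u + s *\<^sub>R h)) \<le> norm (u + s *\<^sub>R h)" using re_le[of "w (u + s *\<^sub>R h)"] w(3)[of "u + s *\<^sub>R h"] by linarith
        ultimately have "s * re (w h) \<le> norm (u + s *\<^sub>R h) - norm u" using u by simp
        then show ?thesis unfolding q_def using s by (simp add: le_divide_eq mult.commute)
      qed
      have "re (g h) - \<epsilon> / 2 \<le> D h" using lower wh by (intro Dge) (blast intro: order_trans)
      moreover have "D h \<le> q t h" using Dle t by simp
      ultimately have "\<bar>q t h - D h\<bar> \<le> \<epsilon> / 2" using upper by simp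
      then show "\<bar>(norm (u + t *\<^sub>R h) - norm u) / t - D h\<bar> < \<epsilon>" using e unfolding q_def by simp
    qed
  qed
qed

theorem ssd_all:
  fixes x :: 'a
  assumes idx: "num_index sc = 1" and nu: "Lpp_nu sc"
  shows "norm_SSD_at x"
proof (cases "x = 0")
  case True then show ?thesis using ssd_zero by simp
next
  case False
  have "norm (x /\<^sub>R norm x) = 1" using False by simp
  then have "norm_SSD_at (x /\<^sub>R norm x)" by (rule ssd_unit[OF idx nu])
  then have "norm_SSD_at (norm x *\<^sub>R (x /\<^sub>R norm x))" by (rule ssd_scale) (use False in simp)
  then show ?thesis using False by simp
qed

end



lemma real_HB_func:
  fixes x :: "'a::real_normed_vector"
  assumes "x \<noteq> 0"
  shows "\<exists>f. is_functional (scaleR :: real \<Rightarrow> 'a \<Rightarrow> 'a) f \<and> onorm f = 1 \<and> f x = of_real (norm x)"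
proof -
  obtain f where f: "linear f" "\<And>y. \<bar>f y\<bar> \<le> norm y" "f x = norm x" using real_HB[of x] by blast
  have bl: "bounded_linear f"
    by (rule bounded_linear_intro[where K=1])
       (use f linear_add[OF f(1)] linear_scale[OF f(1)] in auto)
  have "is_functional (scaleR :: real \<Rightarrow> 'a \<Rightarrow> 'a) f"
    unfolding is_functional_def using bl linear_scale[OF f(1)] by simp
  moreover have "onorm f = 1" by (rule onorm_one[OF bl]) (use f assms in auto)
  ultimately show ?thesis using f by auto
qed

interpretation rscal: scal "scaleR :: real \<Rightarrow> 'a::banach \<Rightarrow> 'a" "\<lambda>r. r"
proof unfold_locales
  fix x :: 'a assume "x \<noteq> 0"
  then show "\<exists>f. is_functional (*\<^sub>R) f \<and> onorm f = 1 \<and> f x = of_real (norm x)"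
    using real_HB_func[of x] by simp
qed (auto simp: scaleR_add_left scaleR_add_right)

lemma complex_HB_func:
  fixes x :: "'a::real_normed_vector" and sc :: "complex \<Rightarrow> 'a \<Rightarrow> 'a"
  assumes sc: "cplx_action sc" and x: "x \<noteq> 0"
  shows "\<exists>f. is_functional sc f \<and> onorm f = 1 \<and> f x = of_real (norm x)"
proof -
  have sc1: "sc 1 y = y" and scm: "sc (a * b) y = sc a (sc b y)" and scl: "sc (a + b) y = sc a y + sc b y"
    and scr: "sc a (y + z) = sc a y + sc a z" and scR: "sc (complex_of_real r) y = r *\<^sub>R y"
    and scn: "norm (sc a y) = cmod a * norm y" for a b y z r
    using sc unfolding cplx_action_def by auto
  obtain g where g: "linear g" "\<And>y. \<bar>g y\<bar> \<le> norm y" "g x = norm x" using real_HB[of x] by blast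
  have gadd: "g (a + b) = g a + g b" and gsc: "g (r *\<^sub>R a) = r * g a" for a b r
    using linear_add[OF g(1)] linear_scale[OF g(1)] by auto
  define f where "f = (\<lambda>y. Complex (g y) (- g (sc \<i> y)))"
  have ii: "sc \<i> (sc \<i> y) = - y" for y
    using scm[of \<i> \<i> y] scR[of "-1" y] by simp
  have decomp: "sc c y = Re c *\<^sub>R y + Im c *\<^sub>R sc \<i> y" for c y
  proof -
    have "c = complex_of_real (Re c) + complex_of_real (Im c) * \<i>" by (simp add: complex_eq_iff)
    then have "sc c y = sc (complex_of_real (Re c) + complex_of_real (Im c) * \<i>) y"
      by (rule arg_cong[where f="\<lambda>c. sc c y"])
    also have "\<dots> = sc (complex_of_real (Re c)) y + sc (complex_of_real (Im c)) (sc \<i> y)"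
      by (simp only: scl scm)
    finally have "sc c y = sc (complex_of_real (Re c)) y + sc (complex_of_real (Im c)) (sc \<i> y)" .
    then show ?thesis by (simp add: scR)
  qed
  have scr_scale: "sc a (r *\<^sub>R y) = r *\<^sub>R sc a y" for a r y
    using scm[of a "complex_of_real r" y] scm[of "complex_of_real r" a y] scR by (simp add: mult.commute)
  have fl: "f (sc c y) = c * f y" for c y
  proof -
    have 1: "g (sc c y) = Re c * g y + Im c * g (sc \<i> y)" using decomp[of c y] gadd gsc by simp
    have "sc \<i> (sc c y) = Re c *\<^sub>R sc \<i> y - Im c *\<^sub>R y"
    proof -
      have "sc \<i> (sc c y) = sc \<i> (Re c *\<^sub>R y) + sc \<i> (Im c *\<^sub>R sc \<i> y)"
        using decomp[of c y] scr by simp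
      also have "\<dots> = Re c *\<^sub>R sc \<i> y + Im c *\<^sub>R (- y)" by (simp only: scr_scale ii)
      finally show ?thesis by simp
    qed
    then have 2: "g (sc \<i> (sc c y)) = Re c * g (sc \<i> y) - Im c * g y"
      using linear_diff[OF g(1)] gsc by simp
    have 3: "Re (c * f y) = Re c * g y + Im c * g (sc \<i> y)" unfolding f_def by simp
    have 4: "Im (c * f y) = - (Re c * g (sc \<i> y) - Im c * g y)" unfolding f_def by simp
    show ?thesis
    proof (rule complex_eqI)
      show "Re (f (sc c y)) = Re (c * f y)" unfolding 3 unfolding f_def using 1 by simp
      show "Im (f (sc c y)) = Im (c * f y)" unfolding 4 unfolding f_def using 2 by simp
    qed
  qed
  have fadd: "f (a + b) = f a + f b" for a b unfolding f_def by (simp add: gadd scr complex_eq_iff)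
  have fsc: "f (r *\<^sub>R a) = r *\<^sub>R f a" for r a
    using fl[of "complex_of_real r" a] by (simp add: scR scaleR_conv_of_real)
  have Ref: "Re (f y) = g y" for y unfolding f_def by simp
  have fb: "norm (f y) \<le> norm y" for y
  proof (cases "f y = 0")
    case True then show ?thesis by simp
  next
    case False
    define c where "c = cnj (f y) / complex_of_real (cmod (f y))"
    have cc: "cmod c = 1" using False unfolding c_def by (simp add: norm_divide)
    have nz: "cmod (f y) \<noteq> 0" using False by simp
    have "cnj (f y) * f y = complex_of_real ((cmod (f y))\<^sup>2)"
      using complex_norm_square[of "f y"] by (simp add: mult.commute)
    then have "c * f y = complex_of_real ((cmod (f y))\<^sup>2) / complex_of_real (cmod (f y))"
      unfolding c_def by (simp add: field_simps)
    also have "\<dots> = complex_of_real (cmod (f y))" using nz by (simp add: power2_eq_square)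
    finally have "c * f y = complex_of_real (cmod (f y))" .
    then have "cmod (f y) = Re (f (sc c y))" using fl by simp
    also have "\<dots> = g (sc c y)" by (rule Ref)
    also have "\<dots> \<le> norm (sc c y)" using g(2)[of "sc c y"] by simp
    also have "\<dots> = norm y" using scn cc by simp
    finally show ?thesis by simp
  qed
  have bl: "bounded_linear f"
    by (rule bounded_linear_intro[where K=1]) (use fadd fsc fb in auto)
  have fx: "f x = complex_of_real (norm x)"
  proof -
    have "Re (f x) = norm x" using Ref g(3) by simp
    moreover have "cmod (f x) \<le> norm x" by (rule fb)
    ultimately have "Im (f x) = 0"
    proof -
      assume a: "Re (f x) = norm x" "cmod (f x) \<le> norm x"
      have "(cmod (f x))\<^sup>2 \<le> (norm x)\<^sup>2" using a(2) by (simp add: power_mono)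
      then have "(Im (f x))\<^sup>2 \<le> 0" using cmod_power2[of "f x"] a(1) by simp
      then show ?thesis by simp
    qed
    then show ?thesis using \<open>Re (f x) = norm x\<close> by (simp add: complex_eq_iff)
  qed
  have "is_functional sc f" unfolding is_functional_def using bl fl by simp
  moreover have "onorm f = 1" by (rule onorm_one[OF bl fb x]) (simp add: fx)
  ultimately show ?thesis using fx by blast
qed

lemma cscal: assumes "cplx_action sc" shows "scal sc Re"
proof unfold_locales
  show "\<And>x. x \<noteq> 0 \<Longrightarrow> \<exists>f. is_functional sc f \<and> onorm f = 1 \<and> f x = complex_of_real (norm x)"
    by (rule complex_HB_func[OF assms])
qed (use assms in \<open>simp_all add: cplx_action_def complex_Re_le_cmod\<close>)

theorem proposition3p2:
  shows "(num_index (scaleR :: real \<Rightarrow> 'a::banach \<Rightarrow> 'a) = 1 \<and> Lpp_nu (scaleR :: real \<Rightarrow> 'a \<Rightarrow> 'a)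
            \<longrightarrow> (\<forall>x::'a. norm_SSD_at x))
      \<and> (\<forall>sc :: complex \<Rightarrow> 'b::banach \<Rightarrow> 'b. cplx_action sc \<and> num_index sc = 1 \<and> Lpp_nu sc
            \<longrightarrow> (\<forall>x::'b. norm_SSD_at x))"
  using rscal.ssd_all scal.ssd_all[OF cscal] by blast


end
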